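(* Let $\mathcal{U}=[k]$ be finite, let $\{\mathbf{p}_u\}_{u\in\mathcal{U}}$ be a probability table with every $\mathbf{p}_u\in(0,1)^n$ and $\sum_i p_u^{(i)}=1$, let $d$ be a probability distribution on $\mathcal{U}$, and let $f_d(C^{(i)},C^{(j)})=\sum_{u}d(u)\,\frac{p_u^{(i)}}{p_u^{(i)}+p_u^{(j)}}$ for distinct $i,j$. For every cycle $\mathcal{C}=(c_1,\dots,c_\ell)$ of $\ell\ge3$ pairwise distinct indices in $[n]$, $$1<f_d(C^{(c_\ell)},C^{(c_1)})+\sum_{i=1}^{\ell-1}f_d(C^{(c_i)},C^{(c_{i+1})})<\ell-1.$$
   Context: $C^{(1)},\dots,C^{(n)}$ are class labels; $f_d$ are the overall opinions (edge-weights of the expert graph generated by the probability table and $d$); the displayed sum is the curl of the expert graph along $\mathcal{C}$. *)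

theory Defs
  imports Main "HOL-Analysis.Analysis"
begin

text \<open>Overall opinion f_d(C^(i), C^(j)) of the expert graph: experts u range over {0..<k},
  classes over {0..<n}; p u i is the probability expert u assigns to class i;
  d u is the weight of expert u.\<close>
definition overall_opinion :: "nat \<Rightarrow> (nat \<Rightarrow> real) \<Rightarrow> (nat \<Rightarrow> nat \<Rightarrow> real) \<Rightarrow> nat \<Rightarrow> nat \<Rightarrow> real" where
  "overall_opinion k d p i j = (\<Sum>u<k. d u * (p u i / (p u i + p u j)))"

definition cycle_curl :: "nat \<Rightarrow> (nat \<Rightarrow> real) \<Rightarrow> (nat \<Rightarrow> nat \<Rightarrow> real) \<Rightarrow> nat list \<Rightarrow> real" where
  "cycle_curl k d p c =
     overall_opinion k d p (last c) (hd c)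
     + (\<Sum>i<length c - 1. overall_opinion k d p (c ! i) (c ! (i + 1)))"

end

theory Submission
  imports Defs
begin

lemma denom_lt:
  fixes y :: "nat \<Rightarrow> real"
  assumes pos: "\<And>i. i < L \<Longrightarrow> 0 < y i" and L: "L \<ge> 3" and i: "i < L"
  shows "y i + y (Suc i mod L) < (\<Sum>j<L. y j)"
proof -
  let ?j = "Suc i mod L"
  have j: "?j < L" using L by simp
  have ij: "i \<noteq> ?j"
  proof
    assume h: "i = ?j"
    show False
    proof (cases "Suc i < L")
      case True then show False using h by simp
    next
      case False then have "Suc i = L" using i by simp
      then show False using h L by simp
    qed
  qed
  have "\<exists>m<L. m \<noteq> i \<and> m \<noteq> ?j"
  proof -
    have "card {i, ?j} = 2" using ij by simp
    then have "{i, ?j} \<noteq> {..<L}" using L by (metis card_lessThan numeral_le_iff num.distinct order.refl not_less_eq_eq semiring_norm(69) numeral_3_eq_3 Suc_n_not_le_n numeral_2_eq_2)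
    moreover have "{i, ?j} \<subseteq> {..<L}" using i j by auto
    ultimately show ?thesis by auto
  qed
  then obtain m where m: "m < L" "m \<noteq> i" "m \<noteq> ?j" by blast
  have fin: "finite ({..<L} - {i, ?j})" by simp
  have "(\<Sum>j<L. y j) = (\<Sum>j\<in>{i, ?j}. y j) + (\<Sum>j\<in>{..<L} - {i, ?j}. y j)"
    using i j by (metis Diff_partition finite_lessThan sum.subset_diff add.commute empty_subsetI insert_subset lessThan_iff)
  moreover have "(\<Sum>j\<in>{i, ?j}. y j) = y i + y ?j" using ij by simp
  moreover have "0 < (\<Sum>j\<in>{..<L} - {i, ?j}. y j)"
    using m pos by (intro sum_pos2[OF fin, of m]) (auto intro: less_imp_le)
  ultimately show ?thesis by linarith
qed

lemma cyc_bounds: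
  fixes y :: "nat \<Rightarrow> real"
  assumes pos: "\<And>i. i < L \<Longrightarrow> 0 < y i" and L: "L \<ge> 3"
  shows "1 < (\<Sum>i<L. y i / (y i + y (Suc i mod L)))
       \<and> (\<Sum>i<L. y i / (y i + y (Suc i mod L))) < real L - 1"
proof -
  let ?S = "\<Sum>j<L. y j"
  have Spos: "0 < ?S" using pos L by (intro sum_pos) (auto simp: lessThan_empty_iff)
  have jpos: "\<And>i. i < L \<Longrightarrow> 0 < y (Suc i mod L)" using pos L by simp
  have shift: "(\<Sum>i<L. y (Suc i mod L)) = ?S"
  proof -
    obtain M where M: "L = Suc M" using L by (cases L) auto
    have "(\<Sum>i<L. y (Suc i mod L)) = (\<Sum>i<M. y (Suc i mod L)) + y (Suc M mod L)"
      using M by simp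
    also have "(\<Sum>i<M. y (Suc i mod L)) = (\<Sum>i<M. y (Suc i))"
      using M by (intro sum.cong) auto
    also have "y (Suc M mod L) = y 0" using M by simp
    also have "(\<Sum>i<M. y (Suc i)) + y 0 = ?S"
      using M by (simp only: sum.lessThan_Suc_shift)
    finally show ?thesis .
  qed
  have a: "1 < (\<Sum>i<L. y i / (y i + y (Suc i mod L)))"
  proof -
    have "1 = (\<Sum>i<L. y i / ?S)" using Spos by (simp add: sum_divide_distrib[symmetric])
    also have "\<dots> < (\<Sum>i<L. y i / (y i + y (Suc i mod L)))"
    proof (rule sum_strict_mono)
      show "{..<L} \<noteq> {}" using L by (auto simp: lessThan_empty_iff)
      fix i assume "i \<in> {..<L}"
      then have i: "i < L" by simp
      show "y i / ?S < y i / (y i + y (Suc i mod L))"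
        using denom_lt[of L y, OF pos L i] pos[OF i] jpos[OF i] Spos
        by (intro divide_strict_left_mono) auto
    qed simp
    finally show ?thesis .
  qed
  have b: "1 < (\<Sum>i<L. y (Suc i mod L) / (y i + y (Suc i mod L)))"
  proof -
    have "1 = (\<Sum>i<L. y (Suc i mod L) / ?S)" using Spos shift by (simp add: sum_divide_distrib[symmetric])
    also have "\<dots> < (\<Sum>i<L. y (Suc i mod L) / (y i + y (Suc i mod L)))"
    proof (rule sum_strict_mono)
      show "{..<L} \<noteq> {}" using L by (auto simp: lessThan_empty_iff)
      fix i assume "i \<in> {..<L}"
      then have i: "i < L" by simp
      show "y (Suc i mod L) / ?S < y (Suc i mod L) / (y i + y (Suc i mod L))"
        using denom_lt[of L y, OF pos L i] pos[OF i] jpos[OF i] Spos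
        by (intro divide_strict_left_mono) auto
    qed simp
    finally show ?thesis .
  qed
  have "(\<Sum>i<L. y i / (y i + y (Suc i mod L))) + (\<Sum>i<L. y (Suc i mod L) / (y i + y (Suc i mod L)))
        = (\<Sum>i<L. (1::real))"
    unfolding sum.distrib[symmetric]
  proof (rule sum.cong)
    fix i assume "i \<in> {..<L}"
    then have i: "i < L" by simp
    have "0 < y i + y (Suc i mod L)" using pos[OF i] jpos[OF i] by simp
    then show "y i / (y i + y (Suc i mod L)) + y (Suc i mod L) / (y i + y (Suc i mod L)) = 1"
      by (simp add: add_divide_distrib[symmetric])
  qed simp
  then show ?thesis using a b by simp
qed

theorem corollary1:
  fixes k n :: nat and p :: "nat \<Rightarrow> nat \<Rightarrow> real" and d :: "nat \<Rightarrow> real" and c :: "nat list"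
  assumes p_range: "\<And>u i. u < k \<Longrightarrow> i < n \<Longrightarrow> 0 < p u i \<and> p u i < 1"
    and p_sum: "\<And>u. u < k \<Longrightarrow> (\<Sum>i<n. p u i) = 1"
    and d_nonneg: "\<And>u. u < k \<Longrightarrow> 0 \<le> d u"
    and d_sum: "(\<Sum>u<k. d u) = 1"
    and c_len: "length c \<ge> 3"
    and c_dist: "distinct c"
    and c_range: "set c \<subseteq> {..<n}"
  shows "1 < cycle_curl k d p c \<and> cycle_curl k d p c < real (length c) - 1"
proof -
  define L where "L = length c"
  define T where "T u = (\<Sum>i<L. p u (c!i) / (p u (c!i) + p u (c ! (Suc i mod L))))" for u
  obtain M where M: "L = Suc M" using c_len unfolding L_def by (cases "length c") auto
  have cne: "c \<noteq> []" using c_len by auto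
  have hd: "hd c = c ! 0" using cne by (simp add: hd_conv_nth)
  have lst: "last c = c ! M" using cne M L_def by (simp add: last_conv_nth)
  have curl: "cycle_curl k d p c = (\<Sum>u<k. d u * T u)"
  proof -
    have "cycle_curl k d p c = (\<Sum>u<k. d u * (p u (c!M) / (p u (c!M) + p u (c!0)))) +
        (\<Sum>i<M. \<Sum>u<k. d u * (p u (c!i) / (p u (c!i) + p u (c!(i+1)))))"
      unfolding cycle_curl_def overall_opinion_def using hd lst M L_def by simp
    also have "\<dots> = (\<Sum>u<k. d u * (p u (c!M) / (p u (c!M) + p u (c!0)))) +
        (\<Sum>u<k. \<Sum>i<M. d u * (p u (c!i) / (p u (c!i) + p u (c!(i+1)))))"
      by (simp add: sum.swap[of _ "{..<M}"])
    also have "\<dots> = (\<Sum>u<k. d u * T u)"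
      unfolding sum.distrib[symmetric]
    proof (rule sum.cong)
      fix u
      have "T u = (\<Sum>i<M. p u (c!i) / (p u (c!i) + p u (c ! (Suc i mod L)))) +
                 p u (c!M) / (p u (c!M) + p u (c ! (Suc M mod L)))"
        unfolding T_def using M by simp
      also have "(\<Sum>i<M. p u (c!i) / (p u (c!i) + p u (c ! (Suc i mod L)))) =
                 (\<Sum>i<M. p u (c!i) / (p u (c!i) + p u (c ! (i+1))))"
        using M by (intro sum.cong) auto
      finally have "T u = (\<Sum>i<M. p u (c!i) / (p u (c!i) + p u (c ! (i+1)))) +
                 p u (c!M) / (p u (c!M) + p u (c ! 0))" using M by simp
      then show "d u * (p u (c!M) / (p u (c!M) + p u (c!0))) +
          (\<Sum>i<M. d u * (p u (c!i) / (p u (c!i) + p u (c!(i+1))))) = d u * T u"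
        by (simp add: sum_distrib_left distrib_left)
    qed simp
    finally show ?thesis .
  qed
  have Tb: "1 < T u \<and> T u < real L - 1" if u: "u < k" for u
    unfolding T_def
  proof (rule cyc_bounds)
    show "3 \<le> L" using c_len L_def by simp
    fix i assume "i < L"
    then have "c ! i < n" using c_range L_def nth_mem by fastforce
    then show "0 < p u (c ! i)" using p_range u by blast
  qed
  obtain u0 where u0: "u0 < k" "0 < d u0"
  proof -
    have "\<exists>u<k. 0 < d u"
    proof (rule ccontr)
      assume "\<not> ?thesis"
      then have "\<And>u. u < k \<Longrightarrow> d u = 0" using d_nonneg by force
      then have "(\<Sum>u<k. d u) = 0" by simp
      then show False using d_sum by simp
    qed
    then show ?thesis using that by blast
  qed
  have lo: "(\<Sum>u<k. d u * 1) < (\<Sum>u<k. d u * T u)"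
  proof (rule sum_strict_mono_ex1)
    show "\<forall>u\<in>{..<k}. d u * 1 \<le> d u * T u"
    proof
      fix u assume "u \<in> {..<k}"
      then have "1 \<le> T u" "0 \<le> d u" using Tb d_nonneg by (auto intro: less_imp_le)
      then show "d u * 1 \<le> d u * T u" by (intro mult_left_mono)
    qed
    show "\<exists>u\<in>{..<k}. d u * 1 < d u * T u"
      using Tb[OF u0(1)] u0 by (intro bexI[of _ u0]) auto
  qed simp
  have hi: "(\<Sum>u<k. d u * T u) < (\<Sum>u<k. d u * (real L - 1))"
  proof (rule sum_strict_mono_ex1)
    show "\<forall>u\<in>{..<k}. d u * T u \<le> d u * (real L - 1)"
      using Tb d_nonneg by (auto intro: mult_left_mono less_imp_le)
    show "\<exists>u\<in>{..<k}. d u * T u < d u * (real L - 1)"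
      using Tb[OF u0(1)] u0 by (intro bexI[of _ u0]) auto
  qed simp
  have "(\<Sum>u<k. d u * (real L - 1)) = real L - 1"
    using d_sum by (simp add: sum_distrib_right[symmetric])
  then show ?thesis using lo hi curl d_sum L_def by simp
qed

end
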